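(* For the cyclically closed $2\times2\times M$ lattice model described in the context, with arbitrary real couplings $(J_\alpha)_{\alpha\in\Phi}$ and temperature $T>0$, let $Z_M=\sum_\sigma \exp(-\mathcal H(\sigma)/(k_BT))$ (sum over all $\sigma\in\{-1,1\}^{4M}$), let $Z'_M$ be the same sum restricted to non-percolation configurations, and let $P_M=Z'_M/Z_M$ be the non-percolation probability. Let $\lambda_{\max}$ be the largest real root of the characteristic equation of the $4\times4$ matrix $\tau$, and $\mu_{\max}$ the largest real root of the characteristic equation of the $3\times3$ matrix $\tau'$, both defined in the context. Then $$\lim_{M\to\infty}\frac{\ln P_M}{M}=\ln\frac{\mu_{\max}}{\lambda_{\max}}.$$
   Context: Lattice: sites $t_i^m$, $i\in\{0,1,2,3\}$, $m\in\{0,\dots,M-1\}$, with cyclic closure $t_i^M\equiv t_i^0$; each site carries a spin $\sigma_{t_i^m}=\sigma_i^m\in\{-1,1\}$. For a set $\Omega$ of sites, $\sigma_\Omega=\prod_{t\in\Omega}\sigma_t$. For fixed $m$ write $a_i=t_i^m$, $b_i=t_i^{m+1}$, and $C_m=\{a_0,\dots,a_3,b_0,\dots,b_3\}$. Let $\rho$ be the rotation $\rho(a_i)=a_{i+1\bmod4}$, $\rho(b_i)=b_{i+1\bmod 4}$. Generating supports $\Phi=\Phi_2\cup\Phi_4\cup\Phi_6\cup\Phi_8$: $\Phi_2=\{\{a_0,a_1\},\{a_0,a_2\},\{b_0,b_1\},\{b_0,b_2\},\{a_0,b_0\},\{a_0,b_1\},\{a_0,b_2\},\{a_0,b_3\}\}$;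 $\Phi_4$ consists of the 22 sets $\{a_0,b_0,b_1,b_2\}$, $\{a_0,b_1,b_2,b_3\}$, $\{a_0,b_2,b_3,b_0\}$, $\{a_0,b_3,b_0,b_1\}$, $\{a_0,a_1,b_0,b_1\}$, $\{a_0,a_1,b_1,b_2\}$, $\{a_0,a_1,b_2,b_3\}$, $\{a_0,a_1,b_3,b_0\}$, $\{a_0,a_1,b_0,b_2\}$, $\{a_0,a_1,b_1,b_3\}$, $\{a_0,a_2,b_0,b_1\}$, $\{a_0,a_2,b_1,b_2\}$, $\{a_0,a_2,b_2,b_3\}$, $\{a_0,a_2,b_3,b_0\}$, $\{a_0,a_2,b_0,b_2\}$, $\{a_0,a_2,b_1,b_3\}$, $\{a_0,a_1,a_2,b_0\}$, $\{a_0,a_1,a_2,b_1\}$, $\{a_0,a_1,a_2,b_2\}$, $\{a_0,a_1,a_2,b_3\}$, $\{a_0,a_1,a_2,a_3\}$, $\{b_0,b_1,b_2,b_3\}$; $\Phi_6=\{C_m\setminus\beta:\beta\in\Phi_2\}$; $\Phi_8=\{C_m\}$. Couplings $J_\alpha\in\mathbb R$ ($\alpha\in\Phi$), independent of $m$. $\mathcal H^m=-\sum_{\alpha\in\Phi}J_\alpha\sum_{r=0}^3\sigma_{\rho^r(\alpha)}$, $\mathcal H=\sum_{m=0}^{M-1}\mathcal H^m$. Percolation: a configuration is a percolation configuration if for some $m\in\{0,\dots,M-1\}$ one of $\sigma_0^m=\sigma_1^m=-1$, $\sigma_1^m=\sigma_2^m=-1$, $\sigma_2^m=\sigma_3^m=-1$,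 $\sigma_3^m=\sigma_0^m=-1$ holds; otherwise it is a non-percolation configuration. Transfer matrices: index a layer state $(s_0,\dots,s_3)\in\{-1,1\}^4$ by $k=1+\sum_{i=0}^3 2^i(1-s_i)/2$. $\theta_{k,l}=\exp(-\mathcal H^m/(k_BT))$ with layer $m$ in state $k$ and layer $m+1$ in state $l$. $\tau$ is $4\times4$ with $\tau_{i,j}=\sum_{l\in G_j}\theta_{r_i,l}$, $(r_1,\dots,r_4)=(1,2,4,6)$, $G_1=\{1,16\}$, $G_2=\{2,3,5,8,9,12,14,15\}$, $G_3=\{4,7,10,13\}$, $G_4=\{6,11\}$. $\tau'$ is $3\times3$ with $\tau'_{i,j}=\sum_{l\in G'_j}\theta_{r'_i,l}$, $(r'_1,r'_2,r'_3)=(1,2,6)$, $G'_1=\{1\}$, $G'_2=\{2,3,5,9\}$, $G'_3=\{6,11\}$. *)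

theory Defs
  imports Complex_Main "Jordan_Normal_Form.Char_Poly"
begin

text \<open>Sites of the elementary cell C_m: A i stands for a_i = t_i^m, B i for b_i = t_i^(m+1),
  with i in {0,1,2,3}.\<close>
datatype site = A nat | B nat

definition cellC :: "site set" where
  "cellC = {A 0, A 1, A 2, A 3, B 0, B 1, B 2, B 3}"

fun rho :: "site \<Rightarrow> site" where
  "rho (A i) = A ((i + 1) mod 4)"
| "rho (B i) = B ((i + 1) mod 4)"

definition Phi2 :: "site set set" where
  "Phi2 = {{A 0, A 1}, {A 0, A 2}, {B 0, B 1}, {B 0, B 2},
           {A 0, B 0}, {A 0, B 1}, {A 0, B 2}, {A 0, B 3}}"

definition Phi4 :: "site set set" where
  "Phi4 = {{A 0, B 0, B 1, B 2}, {A 0, B 1, B 2, B 3}, {A 0, B 2, B 3, B 0}, {A 0, B 3, B 0, B 1},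
           {A 0, A 1, B 0, B 1}, {A 0, A 1, B 1, B 2}, {A 0, A 1, B 2, B 3}, {A 0, A 1, B 3, B 0},
           {A 0, A 1, B 0, B 2}, {A 0, A 1, B 1, B 3},
           {A 0, A 2, B 0, B 1}, {A 0, A 2, B 1, B 2}, {A 0, A 2, B 2, B 3}, {A 0, A 2, B 3, B 0},
           {A 0, A 2, B 0, B 2}, {A 0, A 2, B 1, B 3},
           {A 0, A 1, A 2, B 0}, {A 0, A 1, A 2, B 1}, {A 0, A 1, A 2, B 2}, {A 0, A 1, A 2, B 3},
           {A 0, A 1, A 2, A 3}, {B 0, B 1, B 2, B 3}}"

definition Phi6 :: "site set set" where
  "Phi6 = (\<lambda>\<beta>. cellC - \<beta>) ` Phi2"

definition Phi8 :: "site set set" where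
  "Phi8 = {cellC}"

definition Phi :: "site set set" where
  "Phi = Phi2 \<union> Phi4 \<union> Phi6 \<union> Phi8"

text \<open>A layer state: s i is the spin sigma_i of the layer, i < 4.
  spin s s' x is the spin at site x when layer m is in state s and layer m+1 in state s'.\<close>
fun spin :: "(nat \<Rightarrow> int) \<Rightarrow> (nat \<Rightarrow> int) \<Rightarrow> site \<Rightarrow> int" where
  "spin s s' (A i) = s i"
| "spin s s' (B i) = s' i"

definition spinprod :: "(nat \<Rightarrow> int) \<Rightarrow> (nat \<Rightarrow> int) \<Rightarrow> site set \<Rightarrow> int" where
  "spinprod s s' \<Omega> = (\<Prod>x\<in>\<Omega>. spin s s' x)"

definition Hlayer :: "(site set \<Rightarrow> real) \<Rightarrow> (nat \<Rightarrow> int) \<Rightarrow> (nat \<Rightarrow> int) \<Rightarrow> real" where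
  "Hlayer J s s' = - (\<Sum>\<alpha>\<in>Phi. J \<alpha> * (\<Sum>r<4::nat. real_of_int (spinprod s s' ((rho ^^ r) ` \<alpha>))))"

text \<open>Spin configurations of the 2x2xM lattice: sigma m i = sigma_i^m for m < M, i < 4,
  normalised to 1 outside the lattice (so the set is in bijection with {-1,1}^(4M)).\<close>
definition configs :: "nat \<Rightarrow> (nat \<Rightarrow> nat \<Rightarrow> int) set" where
  "configs M = {\<sigma>. (\<forall>m<M. \<forall>i<4. \<sigma> m i \<in> {-1, 1}) \<and> (\<forall>m i. (M \<le> m \<or> 4 \<le> i) \<longrightarrow> \<sigma> m i = 1)}"

definition Htot :: "(site set \<Rightarrow> real) \<Rightarrow> nat \<Rightarrow> (nat \<Rightarrow> nat \<Rightarrow> int) \<Rightarrow> real" where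
  "Htot J M \<sigma> = (\<Sum>m<M. Hlayer J (\<sigma> m) (\<sigma> ((m + 1) mod M)))"

definition percolation :: "nat \<Rightarrow> (nat \<Rightarrow> nat \<Rightarrow> int) \<Rightarrow> bool" where
  "percolation M \<sigma> = (\<exists>m<M. \<exists>i<4. \<sigma> m i = -1 \<and> \<sigma> m ((i + 1) mod 4) = -1)"

definition Z :: "(site set \<Rightarrow> real) \<Rightarrow> real \<Rightarrow> real \<Rightarrow> nat \<Rightarrow> real" where
  "Z J kB T M = (\<Sum>\<sigma>\<in>configs M. exp (- Htot J M \<sigma> / (kB * T)))"

definition Z' :: "(site set \<Rightarrow> real) \<Rightarrow> real \<Rightarrow> real \<Rightarrow> nat \<Rightarrow> real" where
  "Z' J kB T M = (\<Sum>\<sigma>\<in>{\<sigma>\<in>configs M. \<not> percolation M \<sigma>}. exp (- Htot J M \<sigma> / (kB * T)))"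

definition Pnp :: "(site set \<Rightarrow> real) \<Rightarrow> real \<Rightarrow> real \<Rightarrow> nat \<Rightarrow> real" where
  "Pnp J kB T M = Z' J kB T M / Z J kB T M"

text \<open>Layer state with index k (1..16): k = 1 + sum_i 2^i (1 - s_i)/2.\<close>
definition state :: "nat \<Rightarrow> nat \<Rightarrow> int" where
  "state k i = (if i < 4 then 1 - 2 * int (((k - 1) div 2 ^ i) mod 2) else 1)"

definition theta :: "(site set \<Rightarrow> real) \<Rightarrow> real \<Rightarrow> real \<Rightarrow> nat \<Rightarrow> nat \<Rightarrow> real" where
  "theta J kB T k l = exp (- Hlayer J (state k) (state l) / (kB * T))"

text \<open>Matrices use 0-based indices: entry (i,j) here is entry (i+1,j+1) in the paper.\<close>
definition tau :: "(site set \<Rightarrow> real) \<Rightarrow> real \<Rightarrow> real \<Rightarrow> real mat" where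
  "tau J kB T = mat 4 4 (\<lambda>(i, j).
     (\<Sum>l\<in>[{1, 16}, {2, 3, 5, 8, 9, 12, 14, 15}, {4, 7, 10, 13}, {6, 11}] ! j.
        theta J kB T ([1, 2, 4, 6] ! i) l))"

definition tau' :: "(site set \<Rightarrow> real) \<Rightarrow> real \<Rightarrow> real \<Rightarrow> real mat" where
  "tau' J kB T = mat 3 3 (\<lambda>(i, j).
     (\<Sum>l\<in>[{1}, {2, 3, 5, 9}, {6, 11}] ! j.
        theta J kB T ([1, 2, 6] ! i) l))"

definition largest_real_root :: "real mat \<Rightarrow> real" where
  "largest_real_root Q = Max {x. poly (char_poly Q) x = 0}"

end

theory Submission imports Defs "HOL-Analysis.Analysis" begin


lemma perron_type:
  fixes Mx :: "nat \<Rightarrow> nat \<Rightarrow> real" and n :: nat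
  assumes card: "CARD('n::finite) = n"
    and pos: "\<And>i j. i < n \<Longrightarrow> j < n \<Longrightarrow> Mx i j > 0"
  shows "\<exists>c w. c > 0 \<and> (\<forall>i<n. w i > 0) \<and> (\<forall>i<n. (\<Sum>j<n. Mx i j * w j) = c * w i)"
proof -
  obtain h :: "nat \<Rightarrow> 'n" where h: "bij_betw h {..<n} UNIV"
    using ex_bij_betw_nat_finite[of "UNIV :: 'n set"] card by (auto simp: atLeast0LessThan)
  define g where "g = inv_into {..<n} h"
  have g_in: "g i < n" for i
    using h unfolding g_def bij_betw_def by (metis UNIV_I inv_into_into lessThan_iff)
  have gh: "g (h k) = k" if "k < n" for k
    using h that unfolding g_def bij_betw_def by (simp add: inv_into_f_f)
  define B where "B i j = Mx (g i) (g j)" for i j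
  have Bpos: "B i j > 0" for i j unfolding B_def using pos g_in by auto
  define L where "L x = (\<chi> i. \<Sum>j\<in>UNIV. B i j * vec_nth (x) (j))" for x :: "real^'n"
  define D where "D x = (\<Sum>i\<in>UNIV. vec_nth (L x) (i))" for x
  define S where "S = {x :: real^'n. (\<forall>i. 0 \<le> vec_nth (x) (i)) \<and> (\<Sum>i\<in>UNIV. vec_nth (x) (i)) = 1}"
  define f where "f x = (1 / D x) *\<^sub>R L x" for x
  have Lpos: "vec_nth (L x) (i) > 0" if "x \<in> S" for x i
  proof -
    from that have "(\<Sum>i\<in>UNIV. vec_nth (x) (i)) = 1" "\<forall>i. 0 \<le> vec_nth (x) (i)" by (auto simp: S_def)
    then obtain j where j: "vec_nth (x) (j) > 0"
      by (metis (no_types, lifting) less_eq_real_def sum.neutral zero_neq_one)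
    have "0 < (\<Sum>j\<in>UNIV. B i j * vec_nth (x) (j))"
      by (rule sum_pos2[where i=j]) (use j Bpos \<open>\<forall>i. 0 \<le> vec_nth (x) (i)\<close> in \<open>auto intro: mult_nonneg_nonneg less_imp_le\<close>)
    then show ?thesis by (simp add: L_def)
  qed
  have Dpos: "D x > 0" if "x \<in> S" for x
    unfolding D_def by (rule sum_pos2[where i=undefined]) (use Lpos[OF that] in \<open>auto intro: less_imp_le\<close>)
  have "compact S"
  unfolding compact_eq_bounded_closed proof
    have "norm x \<le> 1" if "x \<in> S" for x
      using norm_le_l1_cart[of x] that by (simp add: S_def)
    then show "bounded S" unfolding bounded_iff by blast
    have "S = (\<Inter>i. {x. 0 \<le> vec_nth (x) (i)}) \<inter> {x. (\<Sum>i\<in>UNIV. vec_nth (x) (i)) = 1}"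
      by (auto simp: S_def)
    moreover have "closed {x::real^'n. 0 \<le> vec_nth (x) (i)}" for i
      by (rule closed_Collect_le) (intro continuous_intros)+
    moreover have "closed {x::real^'n. (\<Sum>i\<in>UNIV. vec_nth (x) (i)) = 1}"
      by (rule closed_Collect_eq) (intro continuous_intros)+
    ultimately show "closed S" by auto
  qed
  moreover have "convex S"
    unfolding convex_def S_def
    by (auto simp: sum.distrib sum_distrib_left[symmetric])
  moreover have "S \<noteq> {}"
  proof -
    have "(\<chi> i. 1 / real CARD('n)) \<in> S" by (simp add: S_def)
    then show ?thesis by blast
  qed
  moreover have "continuous_on S f"
    unfolding f_def D_def L_def
  proof (intro continuous_intros ballI)
    fix x assume "x \<in> S"
    from Dpos[OF this] show "(\<Sum>i\<in>UNIV. vec_nth (\<chi> i. \<Sum>j\<in>UNIV. B i j * vec_nth x j) i) \<noteq> 0" by (simp add: D_def L_def)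
  qed
  moreover have "f \<in> S \<rightarrow> S"
  proof
    fix x assume x: "x \<in> S"
    have "(\<Sum>i\<in>UNIV. vec_nth (f x) (i)) = 1"
      using Dpos[OF x] by (simp add: f_def D_def sum_divide_distrib[symmetric])
    moreover have "0 \<le> vec_nth (f x) (i)" for i
      using Dpos[OF x] Lpos[OF x, of i] by (simp add: f_def)
    ultimately show "f x \<in> S" by (simp add: S_def)
  qed
  ultimately obtain x where x: "x \<in> S" "f x = x" by (rule brouwer)
  have eig: "vec_nth (L x) (i) = D x * vec_nth (x) (i)" for i
  proof -
    have "vec_nth (x) (i) = vec_nth (L x) (i) / D x" 
    proof -
      have "vec_nth x i = vec_nth (f x) i" using x(2) by simp
      also have "\<dots> = vec_nth (L x) i / D x" by (simp add: f_def)
      finally show ?thesis .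
    qed
    then show ?thesis using Dpos[OF x(1)] by (simp add: field_simps)
  qed
  have xpos: "vec_nth (x) (i) > 0" for i
    using eig[of i] Lpos[OF x(1), of i] Dpos[OF x(1)] by (metis zero_less_mult_pos)
  define w where "w k = vec_nth (x) (h k)" for k
  have "(\<Sum>j<n. Mx i j * w j) = D x * w i" if i: "i < n" for i
  proof -
    have "(\<Sum>j<n. Mx i j * w j) = (\<Sum>j<n. B (h i) (h j) * vec_nth (x) (h j))"
      using gh i by (simp add: B_def w_def)
    also have "\<dots> = (\<Sum>j\<in>UNIV. B (h i) j * vec_nth (x) (j))"
      using sum.reindex_bij_betw[OF h, of "\<lambda>j. B (h i) j * vec_nth (x) (j)"] by simp
    also have "\<dots> = vec_nth (L x) (h i)" by (simp add: L_def)
    finally show ?thesis using eig by (simp add: w_def)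
  qed
  moreover have "\<forall>i<n. w i > 0" using xpos by (simp add: w_def)
  ultimately show ?thesis using Dpos[OF x(1)] by blast
qed



lemma lrr:
  fixes Q :: "real mat"
  assumes Q: "Q \<in> carrier_mat n n" and n: "n > 0" and c: "c > 0"
    and wpos: "\<forall>i<n. w i > 0"
    and eig: "\<forall>i<n. (\<Sum>j<n. Q $$ (i, j) * w j) = c * w i"
    and nn: "\<forall>i<n. \<forall>j<n. Q $$ (i, j) \<ge> 0"
  shows "largest_real_root Q = c"
proof -
  have dims: "dim_row Q = n" "dim_col Q = n" using Q by auto
  have mv: "vec_index (Q *\<^sub>v v) i = (\<Sum>j<n. Q $$ (i, j) * vec_index v j)"
    if "i < n" "v \<in> carrier_vec n" for i v
    using that dims by (simp add: scalar_prod_def atLeast0LessThan)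
  define R where "R = {x. poly (char_poly Q) x = 0}"
  have fin: "finite R"
  proof -
    have "char_poly Q \<noteq> 0" using degree_monic_char_poly[OF Q] by auto
    then show ?thesis unfolding R_def by (rule poly_roots_finite)
  qed
  have cR: "c \<in> R"
  proof -
    let ?v = "Matrix.vec n w"
    have "eigenvector Q ?v c"
      unfolding eigenvector_def
    proof (intro conjI)
      show "?v \<in> carrier_vec (dim_row Q)" using dims by simp
      show "?v \<noteq> 0\<^sub>v (dim_row Q)"
      proof
        assume "?v = 0\<^sub>v (dim_row Q)"
        then have "vec_index ?v 0 = 0" using n dims by (simp add: index_vec)
        then show False using wpos[rule_format, OF n] n by simp
      qed
      show "Q *\<^sub>v ?v = c \<cdot>\<^sub>v ?v"
        by (rule eq_vecI) (use eig dims mv in auto)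
    qed
    then have "eigenvalue Q c" unfolding eigenvalue_def by blast
    then show ?thesis using eigenvalue_root_char_poly[OF Q] by (simp add: R_def)
  qed
  have le: "x \<le> c" if "x \<in> R" for x
  proof (rule ccontr)
    assume "\<not> x \<le> c"
    then have xc: "x > c" by simp
    from that have "eigenvalue Q x" using eigenvalue_root_char_poly[OF Q] by (simp add: R_def)
    then obtain y where y: "y \<in> carrier_vec n" "y \<noteq> 0\<^sub>v n" "Q *\<^sub>v y = x \<cdot>\<^sub>v y"
      unfolding eigenvalue_def eigenvector_def using dims by auto
    have yeq: "x * vec_index y i = (\<Sum>j<n. Q $$ (i, j) * vec_index y j)" if "i < n" for i
    proof -
      have "vec_index (Q *\<^sub>v y) i = vec_index (x \<cdot>\<^sub>v y) i" using y(3) by simp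
      then show ?thesis using mv[OF that y(1)] that y(1) by simp
    qed
    obtain k where k: "k < n" "vec_index y k \<noteq> 0"
      using y(1,2) by (metis carrier_vecD eq_vecI index_zero_vec(1,2))
    define t where "t = Max ((\<lambda>i. \<bar>vec_index y i\<bar> / w i) ` {..<n})"
    have tge: "\<bar>vec_index y j\<bar> / w j \<le> t" if "j < n" for j
      unfolding t_def using that by (intro Max_ge) auto
    have tle: "\<bar>vec_index y j\<bar> \<le> t * w j" if "j < n" for j
      using tge[OF that] wpos that by (simp add: divide_le_eq)
    obtain i0 where i0: "i0 < n" "t = \<bar>vec_index y i0\<bar> / w i0"
    proof -
      have "t \<in> (\<lambda>i. \<bar>vec_index y i\<bar> / w i) ` {..<n}"
        unfolding t_def using n by (intro Max_in) auto
      then show ?thesis using that by auto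
    qed
    have tpos: "t > 0"
      using tge[OF k(1)] k wpos by (smt (verit) divide_pos_pos zero_less_abs_iff)
    have yi0: "\<bar>vec_index y i0\<bar> = t * w i0" using i0 wpos[rule_format, OF i0(1)] by simp
    have "x * (t * w i0) = \<bar>x * vec_index y i0\<bar>" using xc c yi0 by (simp add: abs_mult)
    also have "\<dots> = \<bar>\<Sum>j<n. Q $$ (i0, j) * vec_index y j\<bar>" using yeq[OF i0(1)] by simp
    also have "\<dots> \<le> (\<Sum>j<n. \<bar>Q $$ (i0, j) * vec_index y j\<bar>)" by (rule sum_abs)
    also have "\<dots> \<le> (\<Sum>j<n. Q $$ (i0, j) * (t * w j))"
    proof (rule sum_mono)
      fix j assume "j \<in> {..<n}"
      then have j: "j < n" by simp
      have "\<bar>Q $$ (i0, j) * vec_index y j\<bar> = Q $$ (i0, j) * \<bar>vec_index y j\<bar>"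
        using nn i0(1) j by (simp add: abs_mult)
      also have "\<dots> \<le> Q $$ (i0, j) * (t * w j)"
        using nn i0(1) j tle[OF j] by (simp add: mult_left_mono)
      finally show "\<bar>Q $$ (i0, j) * vec_index y j\<bar> \<le> Q $$ (i0, j) * (t * w j)" .
    qed
    also have "\<dots> = t * (\<Sum>j<n. Q $$ (i0, j) * w j)"
      by (simp add: sum_distrib_left algebra_simps)
    also have "\<dots> = c * (t * w i0)" using eig i0(1) by simp
    finally have "x * (t * w i0) \<le> c * (t * w i0)" .
    moreover have "t * w i0 > 0" using tpos wpos[rule_format, OF i0(1)] by simp
    ultimately show False using xc by (meson mult_le_cancel_right_pos not_le)
  qed
  show ?thesis
    unfolding largest_real_root_def R_def[symmetric]
    by (rule Max_eqI[OF fin]) (use le cR in auto)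
qed



lemma finite_pos_bounds:
  fixes F :: "'b \<Rightarrow> real"
  assumes "finite X" "X \<noteq> {}" "\<forall>x\<in>X. F x > 0"
  shows "\<exists>a b. 0 < a \<and> (\<forall>x\<in>X. a \<le> F x \<and> F x \<le> b)"
proof -
  have fin: "finite (F ` X)" "F ` X \<noteq> {}" using assms by auto
  show ?thesis
  proof (intro exI conjI ballI)
    show "0 < Min (F ` X)" using fin assms(3) by (subst Min_gr_iff) auto
    fix x assume "x \<in> X"
    then show "Min (F ` X) \<le> F x" "F x \<le> Max (F ` X)" using fin by auto
  qed
qed

lemma growth:
  fixes S :: "'a set" and W :: "'a \<Rightarrow> 'a \<Rightarrow> real" and v :: "'a \<Rightarrow> real"
  assumes fin: "finite S" and ne: "S \<noteq> {}" and Wpos: "\<forall>x\<in>S. \<forall>y\<in>S. W x y > 0"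
    and vpos: "\<forall>x\<in>S. v x > 0" and rho: "\<rho> > 0"
    and eig: "\<forall>x\<in>S. (\<Sum>y\<in>S. W x y * v y) = \<rho> * v x"
  shows "(\<lambda>M. ln (\<Sum>f\<in>PiE {..<M} (\<lambda>_. S). \<Prod>m<M. W (f m) (f ((m+1) mod M))) / real M)
           \<longlonglongrightarrow> ln \<rho>"
proof -
  define P where "P n f = (\<Prod>m<n. W (f m) (f (Suc m)))" for n and f :: "nat \<Rightarrow> 'a"
  define Q where "Q n = (\<Sum>f\<in>PiE {..<Suc n} (\<lambda>_. S). P n f * v (f n))" for n
  define G where "G M = (\<Sum>f\<in>PiE {..<M} (\<lambda>_. S). \<Prod>m<M. W (f m) (f ((m+1) mod M)))" for M :: nat
  have finP: "finite (PiE {..<k} (\<lambda>_. S))" for k :: nat using fin by (intro finite_PiE) auto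
  have neP: "PiE {..<k} (\<lambda>_. S) \<noteq> {}" for k :: nat using ne by (simp add: PiE_eq_empty_iff)
  have Pnn: "P n f \<ge> 0" if "f \<in> PiE {..<Suc n} (\<lambda>_. S)" for n f
    unfolding P_def using that Wpos by (intro prod_nonneg) (auto simp: PiE_iff intro: less_imp_le)
  have Qstep: "Q (Suc n) = \<rho> * Q n" for n
  proof -
    let ?c = "\<lambda>(y, g). g(Suc n := y)"
    have eqP: "PiE {..<Suc (Suc n)} (\<lambda>_. S) = ?c ` (S \<times> PiE {..<Suc n} (\<lambda>_. S))"
      using PiE_insert_eq[of "Suc n" "{..<Suc n}" "\<lambda>_. S"] by (simp add: lessThan_Suc)
    have inj: "inj_on ?c (S \<times> PiE {..<Suc n} (\<lambda>_. S))"
      using inj_combinator[of "Suc n" "{..<Suc n}" "\<lambda>_. S"] by simp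
    have Pupd: "P (Suc n) (g(Suc n := y)) = P n g * W (g n) y" for g y
      unfolding P_def by (simp add: prod.lessThan_Suc)
    have "Q (Suc n) = (\<Sum>p\<in>S \<times> PiE {..<Suc n} (\<lambda>_. S). P (Suc n) (?c p) * v (?c p (Suc n)))"
      unfolding Q_def eqP by (subst sum.reindex[OF inj]) (simp add: case_prod_beta)
    also have "\<dots> = (\<Sum>y\<in>S. \<Sum>g\<in>PiE {..<Suc n} (\<lambda>_. S). P n g * W (g n) y * v y)"
    proof -
      have "(\<Sum>p\<in>S \<times> PiE {..<Suc n} (\<lambda>_. S). P (Suc n) (?c p) * v (?c p (Suc n)))
          = (\<Sum>(y, g)\<in>S \<times> PiE {..<Suc n} (\<lambda>_. S). P n g * W (g n) y * v y)"
        by (intro sum.cong refl) (clarsimp simp: Pupd)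
      then show ?thesis by (simp only: sum.cartesian_product)
    qed
    also have "\<dots> = (\<Sum>g\<in>PiE {..<Suc n} (\<lambda>_. S). P n g * (\<Sum>y\<in>S. W (g n) y * v y))"
      by (subst sum.swap) (simp add: sum_distrib_left mult.assoc)
    also have "\<dots> = (\<Sum>g\<in>PiE {..<Suc n} (\<lambda>_. S). P n g * (\<rho> * v (g n)))"
      by (intro sum.cong refl) (use eig in \<open>auto simp: PiE_iff\<close>)
    also have "\<dots> = \<rho> * Q n" unfolding Q_def by (simp add: sum_distrib_left algebra_simps)
    finally show ?thesis .
  qed
  have Qn: "Q n = \<rho> ^ n * Q 0" for n by (induction n) (auto simp: Qstep)
  have Q0: "Q 0 > 0"
    unfolding Q_def P_def
    by (intro sum_pos finP neP) (use vpos in \<open>auto simp: PiE_iff\<close>)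
  obtain a1 b1 where ab1: "0 < a1" "\<forall>p\<in>S \<times> S. a1 \<le> W (fst p) (snd p) \<and> W (fst p) (snd p) \<le> b1"
    using finite_pos_bounds[of "S \<times> S" "\<lambda>p. W (fst p) (snd p)"] fin ne Wpos by auto
  obtain a2 b2 where ab2: "0 < a2" "\<forall>x\<in>S. a2 \<le> v x \<and> v x \<le> b2"
    using finite_pos_bounds[of S v] fin ne vpos by auto
  have b2: "b2 > 0" using ab2 ne by (meson all_not_in_conv order_less_le_trans)
  have b1: "b1 > 0" using ab1 ne by fastforce
  have Gs: "G (Suc n) = (\<Sum>f\<in>PiE {..<Suc n} (\<lambda>_. S). P n f * W (f n) (f 0))" for n
    unfolding G_def P_def
    by (intro sum.cong refl) (simp add: prod.lessThan_Suc)
  have Gup: "G (Suc n) \<le> (b1 / a2) * Q n" for n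
  proof -
    have "G (Suc n) \<le> (\<Sum>f\<in>PiE {..<Suc n} (\<lambda>_. S). P n f * ((b1 / a2) * v (f n)))"
      unfolding Gs
    proof (intro sum_mono mult_left_mono Pnn)
      fix f assume f: "f \<in> PiE {..<Suc n} (\<lambda>_. S)"
      then have "f n \<in> S" "f 0 \<in> S" by (auto simp: PiE_iff)
      then have "W (f n) (f 0) \<le> b1" "a2 \<le> v (f n)" using ab1 ab2 by auto
      moreover have "1 \<le> v (f n) / a2" using ab2(1) \<open>a2 \<le> v (f n)\<close> by simp
      then have "b1 * 1 \<le> b1 * (v (f n) / a2)" using b1 by (intro mult_left_mono) auto
      ultimately show "W (f n) (f 0) \<le> b1 / a2 * v (f n)" by simp
    qed
    also have "\<dots> = (b1 / a2) * Q n" unfolding Q_def by (simp add: sum_distrib_left algebra_simps)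
    finally show ?thesis .
  qed
  have Glo: "(a1 / b2) * Q n \<le> G (Suc n)" for n
  proof -
    have "(a1 / b2) * Q n = (\<Sum>f\<in>PiE {..<Suc n} (\<lambda>_. S). P n f * ((a1 / b2) * v (f n)))"
      unfolding Q_def by (simp add: sum_distrib_left algebra_simps)
    also have "\<dots> \<le> G (Suc n)"
      unfolding Gs
    proof (intro sum_mono mult_left_mono Pnn)
      fix f assume f: "f \<in> PiE {..<Suc n} (\<lambda>_. S)"
      then have "f n \<in> S" "f 0 \<in> S" by (auto simp: PiE_iff)
      then have "a1 \<le> W (f n) (f 0)" "v (f n) \<le> b2" using ab1 ab2 by auto
      moreover have "v (f n) / b2 \<le> 1" using b2 \<open>v (f n) \<le> b2\<close> by simp
      then have "a1 * (v (f n) / b2) \<le> a1 * 1" using ab1(1) by (intro mult_left_mono) auto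
      ultimately show "a1 / b2 * v (f n) \<le> W (f n) (f 0)" by simp
    qed
    finally show ?thesis .
  qed
  define lo where "lo = ln (a1 / b2 * Q 0)"
  define hi where "hi = ln (b1 / a2 * Q 0)"
  have lnG: "lo + real n * ln \<rho> \<le> ln (G (Suc n)) \<and> ln (G (Suc n)) \<le> hi + real n * ln \<rho>" for n
  proof -
    have p1: "0 < a1 / b2 * Q 0" using ab1 b2 Q0 by simp
    have p2: "0 < b1 / a2 * Q 0" using b1 ab2 Q0 by simp
    have e1: "ln (a1 / b2 * Q n) = lo + real n * ln \<rho>"
    proof -
      have "a1 / b2 * Q n = (a1 / b2 * Q 0) * \<rho> ^ n" by (simp add: Qn[of n] algebra_simps)
      then have "ln (a1 / b2 * Q n) = ln (a1 / b2 * Q 0) + ln (\<rho> ^ n)"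
        by (subst \<open>a1 / b2 * Q n = (a1 / b2 * Q 0) * \<rho> ^ n\<close>) (rule ln_mult_pos[OF p1], simp add: rho)
      then show ?thesis using rho by (simp add: lo_def ln_realpow)
    qed
    have e2: "ln (b1 / a2 * Q n) = hi + real n * ln \<rho>"
    proof -
      have "b1 / a2 * Q n = (b1 / a2 * Q 0) * \<rho> ^ n" by (simp add: Qn[of n] algebra_simps)
      then have "ln (b1 / a2 * Q n) = ln (b1 / a2 * Q 0) + ln (\<rho> ^ n)"
        by (subst \<open>b1 / a2 * Q n = (b1 / a2 * Q 0) * \<rho> ^ n\<close>) (rule ln_mult_pos[OF p2], simp add: rho)
      then show ?thesis using rho by (simp add: hi_def ln_realpow)
    qed
    have q: "0 < Q n" using Qn[of n] Q0 rho by simp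
    have "0 < a1 / b2 * Q n" using q ab1 b2 by simp
    then show ?thesis using Glo[of n] Gup[of n] e1 e2
      by (smt (verit) ln_le_cancel_iff)
  qed
  have lim_lo: "(\<lambda>M. ln \<rho> + (lo - ln \<rho>) / real M) \<longlonglongrightarrow> ln \<rho>"
    using tendsto_add[OF tendsto_const lim_const_over_n[of "lo - ln \<rho>"]] by simp
  have lim_hi: "(\<lambda>M. ln \<rho> + (hi - ln \<rho>) / real M) \<longlonglongrightarrow> ln \<rho>"
    using tendsto_add[OF tendsto_const lim_const_over_n[of "hi - ln \<rho>"]] by simp
  have ev: "\<forall>\<^sub>F M in sequentially. ln \<rho> + (lo - ln \<rho>) / real M \<le> ln (G M) / real M
      \<and> ln (G M) / real M \<le> ln \<rho> + (hi - ln \<rho>) / real M"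
  proof (rule eventually_sequentiallyI[of 1])
    fix M :: nat assume "1 \<le> M"
    then obtain n where M: "M = Suc n" by (cases M) auto
    have Mp: "real M > 0" using M by simp
    have id1: "ln \<rho> + (lo - ln \<rho>) / real M = (lo + real n * ln \<rho>) / real M"
      using Mp M by (simp add: field_simps)
    have id2: "ln \<rho> + (hi - ln \<rho>) / real M = (hi + real n * ln \<rho>) / real M"
      using Mp M by (simp add: field_simps)
    show "ln \<rho> + (lo - ln \<rho>) / real M \<le> ln (G M) / real M
      \<and> ln (G M) / real M \<le> ln \<rho> + (hi - ln \<rho>) / real M"
      unfolding id1 id2 using lnG[of n] Mp M by (simp add: divide_right_mono)
  qed
  have "(\<lambda>M. ln (G M) / real M) \<longlonglongrightarrow> ln \<rho>"
    by (rule tendsto_sandwich[OF _ _ lim_lo lim_hi]) (use ev in \<open>auto elim: eventually_mono\<close>)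
  then show ?thesis unfolding G_def .
qed


definition rot :: "(nat \<Rightarrow> int) \<Rightarrow> nat \<Rightarrow> int" where
  "rot s = (\<lambda>i. if i < 4 then s ((i + 1) mod 4) else s i)"
definition flp :: "(nat \<Rightarrow> int) \<Rightarrow> nat \<Rightarrow> int" where
  "flp s = (\<lambda>i. if i < 4 then - s i else s i)"

lemma Phi_sub: "\<alpha> \<in> Phi \<Longrightarrow> \<alpha> \<subseteq> cellC"
  unfolding Phi_def Phi2_def Phi4_def Phi6_def Phi8_def cellC_def by auto

lemma card_even: "\<alpha> \<in> Phi \<Longrightarrow> even (card \<alpha>)"
proof -
  assume a: "\<alpha> \<in> Phi"
  have c2: "\<beta> \<in> Phi2 \<Longrightarrow> card \<beta> = 2 \<and> \<beta> \<subseteq> cellC" for \<beta>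
    unfolding Phi2_def cellC_def by auto
  have cC: "card cellC = 8" unfolding cellC_def by simp
  have fC: "finite cellC" unfolding cellC_def by simp
  show ?thesis
  proof -
    consider "\<alpha> \<in> Phi2" | "\<alpha> \<in> Phi4" | "\<alpha> \<in> Phi6" | "\<alpha> \<in> Phi8" using a unfolding Phi_def by blast
    then show ?thesis
    proof cases
      case 1 then show ?thesis using c2 by auto
    next
      case 2 then show ?thesis unfolding Phi4_def by auto
    next
      case 3
      then obtain \<beta> where "\<beta> \<in> Phi2" "\<alpha> = cellC - \<beta>" unfolding Phi6_def by auto
      moreover have "finite \<beta>" using c2[of \<beta>] fC \<open>\<beta> \<in> Phi2\<close> finite_subset by blast
      ultimately have "card \<alpha> = 6" using c2[of \<beta>] cC card_Diff_subset[of \<beta> cellC] by simp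
      then show ?thesis by simp
    next
      case 4 then show ?thesis using cC unfolding Phi8_def by simp
    qed
  qed
qed

lemma cell_cases: "y \<in> cellC \<Longrightarrow> y = A 0 \<or> y = A 1 \<or> y = A 2 \<or> y = A 3 \<or> y = B 0 \<or> y = B 1 \<or> y = B 2 \<or> y = B 3"
  unfolding cellC_def by blast

lemma rho_cell: "y \<in> cellC \<Longrightarrow> rho y \<in> cellC"
  by (drule cell_cases) (auto simp: cellC_def)

lemma inj_rho: "inj_on rho cellC"
proof (rule inj_onI)
  fix x y assume "x \<in> cellC" "y \<in> cellC" "rho x = rho y"
  then show "x = y" by (auto dest!: cell_cases)
qed

lemma rho4: "y \<in> cellC \<Longrightarrow> (rho ^^ 4) y = y"
proof -
  assume y: "y \<in> cellC"
  have e: "(4::nat) = Suc (Suc (Suc (Suc 0)))" by simp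
  have "(rho ^^ 4) y = rho (rho (rho (rho y)))" by (subst e) simp
  also have "\<dots> = y" using cell_cases[OF y] by auto
  finally show ?thesis .
qed

lemma rhoN_cell: "y \<in> cellC \<Longrightarrow> (rho ^^ r) y \<in> cellC"
  by (induction r) (auto simp: rho_cell)

lemma inj_rhoN: "inj_on (rho ^^ r) cellC"
proof (induction r)
  case 0 then show ?case by simp
next
  case (Suc r)
  have "inj_on (rho \<circ> (rho ^^ r)) cellC"
    by (rule comp_inj_on[OF Suc]) (rule inj_on_subset[OF inj_rho], use rhoN_cell in auto)
  then show ?case by (simp add: comp_def)
qed

lemma spin_rot: "y \<in> cellC \<Longrightarrow> spin (rot s) (rot s') y = spin s s' (rho y)"
  unfolding cellC_def rot_def by auto

lemma spin_flp: "y \<in> cellC \<Longrightarrow> spin (flp s) (flp s') y = - spin s s' y"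
  unfolding cellC_def flp_def by auto

lemma spinprod_rot: "\<beta> \<subseteq> cellC \<Longrightarrow> spinprod (rot s) (rot s') \<beta> = spinprod s s' (rho ` \<beta>)"
proof -
  assume b: "\<beta> \<subseteq> cellC"
  have "spinprod s s' (rho ` \<beta>) = (\<Prod>y\<in>\<beta>. spin s s' (rho y))"
    unfolding spinprod_def by (rule prod.reindex[OF inj_on_subset[OF inj_rho b], unfolded comp_def])
  also have "\<dots> = spinprod (rot s) (rot s') \<beta>"
    unfolding spinprod_def using b by (intro prod.cong refl) (auto simp: spin_rot)
  finally show ?thesis by simp
qed

lemma spinprod_flp: "\<beta> \<subseteq> cellC \<Longrightarrow> spinprod (flp s) (flp s') \<beta> = (-1) ^ card \<beta> * spinprod s s' \<beta>"
proof -
  assume b: "\<beta> \<subseteq> cellC"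
  have "spinprod (flp s) (flp s') \<beta> = (\<Prod>y\<in>\<beta>. (-1) * spin s s' y)"
    unfolding spinprod_def using b by (intro prod.cong refl) (auto simp: spin_flp)
  also have "\<dots> = (-1) ^ card \<beta> * spinprod s s' \<beta>"
    unfolding spinprod_def by (subst prod.distrib) simp
  finally show ?thesis .
qed

lemma sum4: "(\<Sum>r<4::nat. g r) = g 0 + g 1 + g 2 + g 3"
  by (simp add: numeral_eq_Suc)

lemma Hlayer_rot: "Hlayer J (rot s) (rot s') = Hlayer J s s'"
proof -
  have key: "(\<Sum>r<4::nat. real_of_int (spinprod (rot s) (rot s') ((rho ^^ r) ` \<alpha>)))
      = (\<Sum>r<4::nat. real_of_int (spinprod s s' ((rho ^^ r) ` \<alpha>)))" if a: "\<alpha> \<in> Phi" for \<alpha>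
  proof -
    have sub: "(rho ^^ r) ` \<alpha> \<subseteq> cellC" for r using Phi_sub[OF a] rhoN_cell by auto
    have im: "rho ` ((rho ^^ r) ` \<alpha>) = (rho ^^ Suc r) ` \<alpha>" for r by (simp add: image_comp)
    have e4: "(rho ^^ 4) ` \<alpha> = \<alpha>"
    proof -
      have "(rho ^^ 4) ` \<alpha> = id ` \<alpha>" using Phi_sub[OF a] rho4 by (intro image_cong) auto
      then show ?thesis by simp
    qed
    have "(\<Sum>r<4::nat. real_of_int (spinprod (rot s) (rot s') ((rho ^^ r) ` \<alpha>)))
        = (\<Sum>r<4::nat. real_of_int (spinprod s s' ((rho ^^ Suc r) ` \<alpha>)))"
      by (intro sum.cong refl) (simp add: spinprod_rot[OF sub] im)
    also have "\<dots> = (\<Sum>r<4::nat. real_of_int (spinprod s s' ((rho ^^ r) ` \<alpha>)))"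
      unfolding sum4 using e4 by (simp add: numeral_eq_Suc)
    finally show ?thesis .
  qed
  show ?thesis unfolding Hlayer_def
  proof (rule arg_cong[where f=uminus], rule sum.cong[OF refl])
    fix \<alpha> assume "\<alpha> \<in> Phi"
    then show "J \<alpha> * (\<Sum>r<4::nat. real_of_int (spinprod (rot s) (rot s') ((rho ^^ r) ` \<alpha>))) = J \<alpha> * (\<Sum>r<4::nat. real_of_int (spinprod s s' ((rho ^^ r) ` \<alpha>)))"
      by (simp only: key)
  qed
qed

lemma Hlayer_flp: "Hlayer J (flp s) (flp s') = Hlayer J s s'"
proof -
  have "spinprod (flp s) (flp s') ((rho ^^ r) ` \<alpha>) = spinprod s s' ((rho ^^ r) ` \<alpha>)"
    if a: "\<alpha> \<in> Phi" for \<alpha> r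
  proof -
    have sub: "(rho ^^ r) ` \<alpha> \<subseteq> cellC" using Phi_sub[OF a] rhoN_cell by auto
    have "card ((rho ^^ r) ` \<alpha>) = card \<alpha>"
      by (rule card_image[OF inj_on_subset[OF inj_rhoN Phi_sub[OF a]]])
    then have "even (card ((rho ^^ r) ` \<alpha>))" using card_even[OF a] by simp
    then show ?thesis using spinprod_flp[OF sub] by simp
  qed
  then have key: "(\<Sum>r<4::nat. real_of_int (spinprod (flp s) (flp s') ((rho ^^ r) ` \<alpha>)))
      = (\<Sum>r<4::nat. real_of_int (spinprod s s' ((rho ^^ r) ` \<alpha>)))" if a: "\<alpha> \<in> Phi" for \<alpha>
    using a by presburger
  show ?thesis unfolding Hlayer_def
  proof (rule arg_cong[where f=uminus], rule sum.cong[OF refl])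
    fix \<alpha> assume "\<alpha> \<in> Phi"
    then show "J \<alpha> * (\<Sum>r<4::nat. real_of_int (spinprod (flp s) (flp s') ((rho ^^ r) ` \<alpha>))) = J \<alpha> * (\<Sum>r<4::nat. real_of_int (spinprod s s' ((rho ^^ r) ` \<alpha>)))"
      by (simp only: key)
  qed
qed


lemma I16: "{1..16::nat} = {1,2,3,4,5,6,7,8,9,10,11,12,13,14,15,16}"
  by (simp add: Icc_eq_insert_lb_nat numeral_eq_Suc)

lemma k16: "k \<in> {1..16::nat} \<Longrightarrow> k = 1 \<or> k = 2 \<or> k = 3 \<or> k = 4 \<or> k = 5 \<or> k = 6 \<or> k = 7 \<or> k = 8 \<or> k = 9 \<or> k = 10 \<or> k = 11 \<or> k = 12 \<or> k = 13 \<or> k = 14 \<or> k = 15 \<or> k = 16"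
  unfolding I16 by simp

lemma i4: "(i::nat) < 4 \<Longrightarrow> i = 0 \<or> i = 1 \<or> i = 2 \<or> i = 3"
  by auto

definition rotI :: "nat \<Rightarrow> nat" where "rotI k = 1 + ((k - 1) div 2 + ((k - 1) mod 2) * 8)"
definition flpI :: "nat \<Rightarrow> nat" where "flpI k = 17 - k"

lemma state_rot: assumes "k \<in> {1..16}" shows "state (rotI k) = rot (state k)"
proof
  fix i show "state (rotI k) i = rot (state k) i"
  proof (cases "i < 4")
    case True
    then show ?thesis using k16[OF assms] i4[OF True]
      by (elim disjE) (simp_all add: state_def rotI_def rot_def)
  next
    case False then show ?thesis by (simp add: state_def rot_def)
  qed
qed

lemma state_flp: assumes "k \<in> {1..16}" shows "state (flpI k) = flp (state k)"
proof
  fix i show "state (flpI k) i = flp (state k) i"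
  proof (cases "i < 4")
    case True
    then show ?thesis using k16[OF assms] i4[OF True]
      by (elim disjE) (simp_all add: state_def flpI_def flp_def)
  next
    case False then show ?thesis by (simp add: state_def flp_def)
  qed
qed

lemma theta_rot: "k \<in> {1..16} \<Longrightarrow> l \<in> {1..16} \<Longrightarrow> theta J kB T (rotI k) (rotI l) = theta J kB T k l"
  unfolding theta_def by (simp add: state_rot Hlayer_rot)

lemma theta_flp: "k \<in> {1..16} \<Longrightarrow> l \<in> {1..16} \<Longrightarrow> theta J kB T (flpI k) (flpI l) = theta J kB T k l"
  unfolding theta_def by (simp add: state_flp Hlayer_flp)

definition GG :: "nat set list" where
  "GG = [{1, 16}, {2, 3, 5, 8, 9, 12, 14, 15}, {4, 7, 10, 13}, {6, 11}]"
definition GG' :: "nat set list" where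
  "GG' = [{1}, {2, 3, 5, 9}, {6, 11}]"

definition rowf where "rowf J kB T k j = (\<Sum>l\<in>GG ! j. theta J kB T k l)"
definition rowf' where "rowf' J kB T k j = (\<Sum>l\<in>GG' ! j. theta J kB T k l)"

definition cls :: "nat \<Rightarrow> nat" where
  "cls k = (if k \<in> {1, 16} then 0 else if k \<in> {2, 3, 5, 8, 9, 12, 14, 15} then 1
            else if k \<in> {4, 7, 10, 13} then 2 else 3)"
definition cls' :: "nat \<Rightarrow> nat" where
  "cls' k = (if k = 1 then 0 else if k \<in> {2, 3, 5, 9} then 1 else 2)"

lemma tau_entry: "i < 4 \<Longrightarrow> j < 4 \<Longrightarrow> tau J kB T $$ (i, j) = rowf J kB T ([1, 2, 4, 6] ! i) j"
  unfolding tau_def rowf_def GG_def by simp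

lemma tau'_entry: "i < 3 \<Longrightarrow> j < 3 \<Longrightarrow> tau' J kB T $$ (i, j) = rowf' J kB T ([1, 2, 6] ! i) j"
  unfolding tau'_def rowf'_def GG'_def by simp

lemma tau_carrier: "tau J kB T \<in> carrier_mat 4 4" unfolding tau_def by simp
lemma tau'_carrier: "tau' J kB T \<in> carrier_mat 3 3" unfolding tau'_def by simp

lemma GG_props: "j < 4 \<Longrightarrow> rotI ` (GG ! j) \<subseteq> GG ! j \<and> inj_on rotI (GG ! j) \<and>
    flpI ` (GG ! j) \<subseteq> GG ! j \<and> inj_on flpI (GG ! j) \<and> GG ! j \<subseteq> {1..16} \<and> finite (GG ! j) \<and> GG ! j \<noteq> {}"
  by (drule i4) (auto simp: GG_def rotI_def flpI_def)

lemma GG'_props: "j < 3 \<Longrightarrow> rotI ` (GG' ! j) \<subseteq> GG' ! j \<and> inj_on rotI (GG' ! j) \<and>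
    GG' ! j \<subseteq> {1..16} \<and> finite (GG' ! j) \<and> GG' ! j \<noteq> {}"
proof -
  assume "j < 3"
  then have "j = 0 \<or> j = 1 \<or> j = 2" by auto
  then show ?thesis by (auto simp: GG'_def rotI_def)
qed

lemma sum_perm:
  assumes "finite G" "f ` G \<subseteq> G" "inj_on f G" "\<And>l. l \<in> G \<Longrightarrow> h (f l) = g l"
  shows "(\<Sum>l\<in>G. h l) = (\<Sum>l\<in>G. g l)"
proof -
  have "f ` G = G" using endo_inj_surj assms(1-3) by blast
  then have "(\<Sum>l\<in>G. h l) = (\<Sum>l\<in>f ` G. h l)" by simp
  also have "\<dots> = (\<Sum>l\<in>G. h (f l))" by (rule sum.reindex[OF assms(3), unfolded comp_def])
  also have "\<dots> = (\<Sum>l\<in>G. g l)" using assms(4) by simp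
  finally show ?thesis .
qed

lemma rowf_rot: assumes k: "k \<in> {1..16}" and j: "j < 4" shows "rowf J kB T (rotI k) j = rowf J kB T k j"
proof -
  have L: "l \<in> {1..16}" if "l \<in> GG ! j" for l using GG_props[OF j] that by blast
  show ?thesis unfolding rowf_def
    by (intro sum_perm[where f = rotI]) (use GG_props[OF j] theta_rot[OF k L] in auto)
qed

lemma rowf_flp: assumes k: "k \<in> {1..16}" and j: "j < 4" shows "rowf J kB T (flpI k) j = rowf J kB T k j"
proof -
  have L: "l \<in> {1..16}" if "l \<in> GG ! j" for l using GG_props[OF j] that by blast
  show ?thesis unfolding rowf_def
    by (intro sum_perm[where f = flpI]) (use GG_props[OF j] theta_flp[OF k L] in auto)
qed

lemma rowf'_rot: assumes k: "k \<in> {1..16}" and j: "j < 3" shows "rowf' J kB T (rotI k) j = rowf' J kB T k j"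
proof -
  have L: "l \<in> {1..16}" if "l \<in> GG' ! j" for l using GG'_props[OF j] that by blast
  show ?thesis unfolding rowf'_def
    by (intro sum_perm[where f = rotI]) (use GG'_props[OF j] theta_rot[OF k L] in auto)
qed

lemma rowf_cls: assumes k: "k \<in> {1..16}" and j: "j < 4"
  shows "rowf J kB T k j = rowf J kB T ([1, 2, 4, 6] ! cls k) j"
proof -
  have Rr: "rowf J kB T (rotI x) j = rowf J kB T x j" if "x \<in> {1..16}" for x using rowf_rot[OF that j] .
  have Ff: "rowf J kB T (flpI x) j = rowf J kB T x j" if "x \<in> {1..16}" for x using rowf_flp[OF that j] .
  have c0: "rowf J kB T 9 j = rowf J kB T 2 j" using Rr[of 2] by (simp add: rotI_def numeral_3_eq_3)
  have c1: "rowf J kB T 5 j = rowf J kB T 9 j" using Rr[of 9] by (simp add: rotI_def numeral_3_eq_3)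
  have c2: "rowf J kB T 3 j = rowf J kB T 5 j" using Rr[of 5] by (simp add: rotI_def numeral_3_eq_3)
  have c3: "rowf J kB T 15 j = rowf J kB T 2 j" using Ff[of 2] by (simp add: flpI_def)
  have c4: "rowf J kB T 8 j = rowf J kB T 9 j" using Ff[of 9] by (simp add: flpI_def)
  have c5: "rowf J kB T 12 j = rowf J kB T 5 j" using Ff[of 5] by (simp add: flpI_def)
  have c6: "rowf J kB T 14 j = rowf J kB T 3 j" using Ff[of 3] by (simp add: flpI_def)
  have c7: "rowf J kB T 10 j = rowf J kB T 4 j" using Rr[of 4] by (simp add: rotI_def numeral_3_eq_3)
  have c8: "rowf J kB T 13 j = rowf J kB T 10 j" using Rr[of 10] by (simp add: rotI_def numeral_3_eq_3)
  have c9: "rowf J kB T 7 j = rowf J kB T 13 j" using Rr[of 13] by (simp add: rotI_def numeral_3_eq_3)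
  have c10: "rowf J kB T 11 j = rowf J kB T 6 j" using Rr[of 6] by (simp add: rotI_def numeral_3_eq_3)
  have c11: "rowf J kB T 16 j = rowf J kB T 1 j" using Ff[of 1] by (simp add: flpI_def)
  show ?thesis using k16[OF k] by (elim disjE) (simp_all add: cls_def c0 c1 c2 c3 c4 c5 c6 c7 c8 c9 c10 c11)
qed

lemma rowf'_cls: assumes k: "k \<in> {1, 2, 3, 5, 6, 9, 11}" and j: "j < 3"
  shows "rowf' J kB T k j = rowf' J kB T ([1, 2, 6] ! cls' k) j"
proof -
  have Rr: "rowf' J kB T (rotI x) j = rowf' J kB T x j" if "x \<in> {1..16}" for x using rowf'_rot[OF that j] .
  have c1: "rowf' J kB T 9 j = rowf' J kB T 2 j" using Rr[of 2] by (simp add: rotI_def numeral_3_eq_3)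
  have c2: "rowf' J kB T 5 j = rowf' J kB T 9 j" using Rr[of 9] by (simp add: rotI_def numeral_3_eq_3)
  have c3: "rowf' J kB T 3 j = rowf' J kB T 5 j" using Rr[of 5] by (simp add: rotI_def numeral_3_eq_3)
  have c4: "rowf' J kB T 11 j = rowf' J kB T 6 j" using Rr[of 6] by (simp add: rotI_def numeral_3_eq_3)
  show ?thesis using k by (auto simp: cls'_def c1 c2 c3 c4)
qed


lemma lift16:
  assumes eig: "\<forall>i<4. (\<Sum>j<4. tau J kB T $$ (i, j) * w j) = c * w i"
  shows "\<forall>k\<in>{1..16}. (\<Sum>l\<in>{1..16}. theta J kB T k l * w (cls l)) = c * w (cls k)"
proof
  fix k :: nat assume k: "k \<in> {1..16}"
  have ck: "cls k < 4" by (simp add: cls_def)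
  have "(\<Sum>l\<in>{1..16}. theta J kB T k l * w (cls l)) = (\<Sum>j<4. w j * rowf J kB T k j)"
    unfolding I16 by (simp add: sum4 rowf_def GG_def cls_def algebra_simps)
  also have "\<dots> = (\<Sum>j<4. tau J kB T $$ (cls k, j) * w j)"
  proof (rule sum.cong[OF refl])
    fix j assume "j \<in> {..<4::nat}"
    then have j: "j < 4" by simp
    show "w j * rowf J kB T k j = tau J kB T $$ (cls k, j) * w j"
      using rowf_cls[OF k j] tau_entry[OF ck j] by simp
  qed
  also have "\<dots> = c * w (cls k)" using eig ck by simp
  finally show "(\<Sum>l\<in>{1..16}. theta J kB T k l * w (cls l)) = c * w (cls k)" .
qed

lemma sum3: "(\<Sum>r<3::nat. g r) = g 0 + g 1 + g 2"
  by (simp add: numeral_eq_Suc)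

lemma lift7:
  assumes eig: "\<forall>i<3. (\<Sum>j<3. tau' J kB T $$ (i, j) * w j) = c * w i"
  shows "\<forall>k\<in>{1, 2, 3, 5, 6, 9, 11}. (\<Sum>l\<in>{1, 2, 3, 5, 6, 9, 11}. theta J kB T k l * w (cls' l)) = c * w (cls' k)"
proof
  fix k :: nat assume k: "k \<in> {1, 2, 3, 5, 6, 9, 11}"
  have ck: "cls' k < 3" by (simp add: cls'_def)
  have "(\<Sum>l\<in>{1, 2, 3, 5, 6, 9, 11}. theta J kB T k l * w (cls' l)) = (\<Sum>j<3. w j * rowf' J kB T k j)"
    by (simp add: sum3 rowf'_def GG'_def cls'_def algebra_simps)
  also have "\<dots> = (\<Sum>j<3. tau' J kB T $$ (cls' k, j) * w j)"
  proof (rule sum.cong[OF refl])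
    fix j assume "j \<in> {..<3::nat}"
    then have j: "j < 3" by simp
    show "w j * rowf' J kB T k j = tau' J kB T $$ (cls' k, j) * w j"
      using rowf'_cls[OF k j] tau'_entry[OF ck j] by simp
  qed
  also have "\<dots> = c * w (cls' k)" using eig ck by simp
  finally show "(\<Sum>l\<in>{1, 2, 3, 5, 6, 9, 11}. theta J kB T k l * w (cls' l)) = c * w (cls' k)" .
qed


definition idx :: "(nat \<Rightarrow> int) \<Rightarrow> nat" where
  "idx s = nat (1 + (1 - s 0) div 2 + (1 - s 1) + 2 * (1 - s 2) + 4 * (1 - s 3))"

lemma idx_state: "k \<in> {1..16} \<Longrightarrow> idx (state k) = k"
  by (drule k16) (auto simp: idx_def state_def)

lemma state_valid: "(i < 4 \<longrightarrow> state k i = -1 \<or> state k i = 1) \<and> (4 \<le> i \<longrightarrow> state k i = 1)"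
proof -
  have "((k - 1) div 2 ^ i) mod 2 = 0 \<or> ((k - 1) div 2 ^ i) mod 2 = 1" by auto
  then show ?thesis by (auto simp: state_def)
qed

lemma state_idx:
  assumes v: "\<forall>i<4. s i = -1 \<or> s i = 1" "\<forall>i. 4 \<le> i \<longrightarrow> s i = 1"
  shows "idx s \<in> {1..16} \<and> state (idx s) = s"
proof -
  have s0: "s 0 = -1 \<or> s 0 = 1" and s1: "s 1 = -1 \<or> s 1 = 1"
    and s2: "s 2 = -1 \<or> s 2 = 1" and s3: "s 3 = -1 \<or> s 3 = 1" using v(1) by auto
  have r: "idx s \<in> {1..16}" using s0 s1 s2 s3 by (elim disjE) (simp_all add: idx_def)
  have "state (idx s) i = s i" for i
  proof (cases "i < 4")
    case True
    then show ?thesis using s0 s1 s2 s3 i4[OF True]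
      by (elim disjE) (simp_all add: idx_def state_def)
  next
    case False then show ?thesis using v(2) by (simp add: state_def)
  qed
  then show ?thesis using r by auto
qed

definition hM :: "nat \<Rightarrow> (nat \<Rightarrow> nat) \<Rightarrow> nat \<Rightarrow> nat \<Rightarrow> int" where
  "hM M f = (\<lambda>m. if m < M then state (f m) else (\<lambda>_. 1))"

lemma configs_state: "\<sigma> \<in> configs M \<Longrightarrow> m < M \<Longrightarrow> idx (\<sigma> m) \<in> {1..16} \<and> state (idx (\<sigma> m)) = \<sigma> m"
  by (rule state_idx) (auto simp: configs_def)

lemma bij_hM:
  assumes X: "X \<subseteq> {1..16}"
  shows "bij_betw (hM M) (PiE {..<M} (\<lambda>_. X)) {\<sigma> \<in> configs M. \<forall>m<M. \<sigma> m \<in> state ` X}"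
  unfolding bij_betw_def
proof (intro conjI)
  show "inj_on (hM M) (PiE {..<M} (\<lambda>_. X))"
  proof (rule inj_onI)
    fix f g assume f: "f \<in> PiE {..<M} (\<lambda>_. X)" and g: "g \<in> PiE {..<M} (\<lambda>_. X)" and e: "hM M f = hM M g"
    show "f = g"
    proof (rule PiE_ext[OF f g])
      fix m assume "m \<in> {..<M}"
      then have m: "m < M" by simp
      have "state (f m) = state (g m)" using fun_cong[OF e, of m] m by (simp add: hM_def)
      then have "idx (state (f m)) = idx (state (g m))" by simp
      moreover have "f m \<in> {1..16}" "g m \<in> {1..16}" using f g m X by (auto simp: PiE_iff)
      ultimately show "f m = g m" by (simp add: idx_state)
    qed
  qed
  show "hM M ` PiE {..<M} (\<lambda>_. X) = {\<sigma> \<in> configs M. \<forall>m<M. \<sigma> m \<in> state ` X}"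
  proof (intro equalityI subsetI)
    fix \<sigma> assume "\<sigma> \<in> hM M ` PiE {..<M} (\<lambda>_. X)"
    then obtain f where f: "f \<in> PiE {..<M} (\<lambda>_. X)" and s: "\<sigma> = hM M f" by blast
    have "\<sigma> \<in> configs M" unfolding configs_def s hM_def using state_valid by auto
    moreover have "\<forall>m<M. \<sigma> m \<in> state ` X" using f by (auto simp: s hM_def PiE_iff)
    ultimately show "\<sigma> \<in> {\<sigma> \<in> configs M. \<forall>m<M. \<sigma> m \<in> state ` X}" by simp
  next
    fix \<sigma> assume "\<sigma> \<in> {\<sigma> \<in> configs M. \<forall>m<M. \<sigma> m \<in> state ` X}"
    then have c: "\<sigma> \<in> configs M" and sx: "\<forall>m<M. \<sigma> m \<in> state ` X" by auto
    define f where "f m = (if m < M then idx (\<sigma> m) else undefined)" for m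
    have fX: "f m \<in> X \<and> state (f m) = \<sigma> m" if m: "m < M" for m
    proof -
      obtain x where x: "x \<in> X" "\<sigma> m = state x" using sx m by blast
      have "idx (\<sigma> m) = x" using x X idx_state by auto
      then show ?thesis using x m by (simp add: f_def)
    qed
    have "f \<in> PiE {..<M} (\<lambda>_. X)" using fX by (auto simp: PiE_iff f_def extensional_def)
    moreover have "hM M f = \<sigma>"
    proof
      fix m show "hM M f m = \<sigma> m"
      proof (cases "m < M")
        case True then show ?thesis using fX by (simp add: hM_def)
      next
        case False then show ?thesis using c by (auto simp: hM_def configs_def)
      qed
    qed
    ultimately show "\<sigma> \<in> hM M ` PiE {..<M} (\<lambda>_. X)" by blast
  qed
qed

lemma weight_hM:
  assumes f: "f \<in> PiE {..<M} (\<lambda>_. X)"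
  shows "exp (- Htot J M (hM M f) / (kB * T)) = (\<Prod>m<M. theta J kB T (f m) (f ((m + 1) mod M)))"
proof -
  have "Htot J M (hM M f) = (\<Sum>m<M. Hlayer J (state (f m)) (state (f ((m + 1) mod M))))"
    unfolding Htot_def
  proof (rule sum.cong[OF refl])
    fix m assume "m \<in> {..<M}"
    then have m: "m < M" by simp
    then have "(m + 1) mod M < M" by simp
    then show "Hlayer J (hM M f m) (hM M f ((m + 1) mod M)) = Hlayer J (state (f m)) (state (f ((m + 1) mod M)))"
      using m by (simp add: hM_def)
  qed
  then have "- Htot J M (hM M f) / (kB * T) = (\<Sum>m<M. - Hlayer J (state (f m)) (state (f ((m + 1) mod M))) / (kB * T))"
    by (simp add: sum_negf sum_divide_distrib)
  then show ?thesis by (simp add: exp_sum theta_def)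
qed

lemma Z_repr: "Z J kB T M = (\<Sum>f\<in>PiE {..<M} (\<lambda>_. {1..16}). \<Prod>m<M. theta J kB T (f m) (f ((m + 1) mod M)))"
proof -
  have C: "configs M = {\<sigma> \<in> configs M. \<forall>m<M. \<sigma> m \<in> state ` {1..16}}"
  proof -
    have "\<sigma> m \<in> state ` {1..16}" if "\<sigma> \<in> configs M" "m < M" for \<sigma> m
      using configs_state[OF that] by (metis image_eqI)
    then show ?thesis by blast
  qed
  have "Z J kB T M = (\<Sum>\<sigma>\<in>{\<sigma> \<in> configs M. \<forall>m<M. \<sigma> m \<in> state ` {1..16}}. exp (- Htot J M \<sigma> / (kB * T)))"
    unfolding Z_def using C by simp
  also have "\<dots> = (\<Sum>f\<in>PiE {..<M} (\<lambda>_. {1..16}). exp (- Htot J M (hM M f) / (kB * T)))"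
    by (rule sum.reindex_bij_betw[OF bij_hM, symmetric]) simp
  also have "\<dots> = (\<Sum>f\<in>PiE {..<M} (\<lambda>_. {1..16}). \<Prod>m<M. theta J kB T (f m) (f ((m + 1) mod M)))"
    by (rule sum.cong[OF refl]) (rule weight_hM)
  finally show ?thesis .
qed

lemma ex4: "(\<exists>i<4::nat. P i) \<longleftrightarrow> P 0 \<or> P 1 \<or> P 2 \<or> P 3"
proof
  assume "\<exists>i<4. P i"
  then obtain i where i: "i < 4" "P i" by blast
  then show "P 0 \<or> P 1 \<or> P 2 \<or> P 3" using i4[OF i(1)] by auto
next
  assume "P 0 \<or> P 1 \<or> P 2 \<or> P 3"
  then show "\<exists>i<4::nat. P i"
  proof (elim disjE)
    assume "P 0" then show ?thesis by (intro exI[where x=0]) simp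
  next
    assume "P 1" then show ?thesis by (intro exI[where x=1]) simp
  next
    assume "P 2" then show ?thesis by (intro exI[where x=2]) simp
  next
    assume "P 3" then show ?thesis by (intro exI[where x=3]) simp
  qed
qed

lemma perc_k: "k \<in> {1..16} \<Longrightarrow> (\<exists>i<4. state k i = -1 \<and> state k ((i + 1) mod 4) = -1) \<longleftrightarrow> k \<notin> {1, 2, 3, 5, 6, 9, 11}"
  unfolding ex4 by (drule k16) (elim disjE; simp add: state_def)

lemma Z'_repr: "Z' J kB T M = (\<Sum>f\<in>PiE {..<M} (\<lambda>_. {1, 2, 3, 5, 6, 9, 11}). \<Prod>m<M. theta J kB T (f m) (f ((m + 1) mod M)))"
proof -
  let ?X = "{1, 2, 3, 5, 6, 9, 11} :: nat set"
  have X: "?X \<subseteq> {1..16}" by auto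
  have eq: "(\<exists>i<4. \<sigma> m i = -1 \<and> \<sigma> m ((i + 1) mod 4) = -1) \<longleftrightarrow> \<sigma> m \<notin> state ` ?X"
    if c: "\<sigma> \<in> configs M" and m: "m < M" for \<sigma> m
  proof -
    have k: "idx (\<sigma> m) \<in> {1..16}" "\<sigma> m = state (idx (\<sigma> m))" using configs_state[OF c m] by auto
    define k where "k = idx (\<sigma> m)"
    have "state k \<in> state ` ?X \<longleftrightarrow> k \<in> ?X"
    proof
      assume "state k \<in> state ` ?X"
      then obtain x where x: "x \<in> ?X" "state k = state x" by blast
      then have "idx (state k) = idx (state x)" by simp
      moreover have "idx (state k) = k" using idx_state k(1) by (simp add: k_def)
      moreover have "idx (state x) = x" using idx_state x(1) X by blast
      ultimately show "k \<in> ?X" using x(1) by simp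
    qed auto
    then show ?thesis using perc_k[OF k(1)] k(2) by (simp add: k_def)
  qed
  have C: "{\<sigma> \<in> configs M. \<not> percolation M \<sigma>} = {\<sigma> \<in> configs M. \<forall>m<M. \<sigma> m \<in> state ` ?X}"
  proof (intro equalityI subsetI)
    fix \<sigma> assume "\<sigma> \<in> {\<sigma> \<in> configs M. \<not> percolation M \<sigma>}"
    then have c: "\<sigma> \<in> configs M" and np: "\<not> percolation M \<sigma>" by auto
    have "\<sigma> m \<in> state ` ?X" if m: "m < M" for m
    proof (rule ccontr)
      assume "\<sigma> m \<notin> state ` ?X"
      then have "\<exists>i<4. \<sigma> m i = -1 \<and> \<sigma> m ((i + 1) mod 4) = -1" using eq[OF c m] by simp
      then have "percolation M \<sigma>" unfolding percolation_def using m by blast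
      then show False using np by simp
    qed
    then show "\<sigma> \<in> {\<sigma> \<in> configs M. \<forall>m<M. \<sigma> m \<in> state ` ?X}" using c by simp
  next
    fix \<sigma> assume "\<sigma> \<in> {\<sigma> \<in> configs M. \<forall>m<M. \<sigma> m \<in> state ` ?X}"
    then have c: "\<sigma> \<in> configs M" and a: "\<forall>m<M. \<sigma> m \<in> state ` ?X" by auto
    have "\<not> percolation M \<sigma>"
    proof
      assume "percolation M \<sigma>"
      then obtain m where m: "m < M" "\<exists>i<4. \<sigma> m i = -1 \<and> \<sigma> m ((i + 1) mod 4) = -1"
        unfolding percolation_def by blast
      then show False using eq[OF c m(1)] a by blast
    qed
    then show "\<sigma> \<in> {\<sigma> \<in> configs M. \<not> percolation M \<sigma>}" using c by simp
  qed
  have "Z' J kB T M = (\<Sum>\<sigma>\<in>{\<sigma> \<in> configs M. \<forall>m<M. \<sigma> m \<in> state ` ?X}. exp (- Htot J M \<sigma> / (kB * T)))"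
    unfolding Z'_def C ..
  also have "\<dots> = (\<Sum>f\<in>PiE {..<M} (\<lambda>_. ?X). exp (- Htot J M (hM M f) / (kB * T)))"
    by (rule sum.reindex_bij_betw[OF bij_hM[OF X], symmetric])
  also have "\<dots> = (\<Sum>f\<in>PiE {..<M} (\<lambda>_. ?X). \<Prod>m<M. theta J kB T (f m) (f ((m + 1) mod M)))"
    by (rule sum.cong[OF refl]) (rule weight_hM)
  finally show ?thesis .
qed


lemma theta_pos: "theta J kB T k l > 0"
  unfolding theta_def by simp

lemma Zsum_pos:
  fixes S :: "nat set" and M :: nat
  assumes "finite S" "S \<noteq> {}"
  shows "(\<Sum>f\<in>PiE {..<M} (\<lambda>_. S). \<Prod>m<M. theta J kB T (f m) (f ((m + 1) mod M))) > 0"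
proof (rule sum_pos)
  show "finite (PiE {..<M} (\<lambda>_. S))" using assms by (intro finite_PiE) auto
  show "PiE {..<M} (\<lambda>_. S) \<noteq> {}" using assms by (simp add: PiE_eq_empty_iff)
  show "\<And>f. f \<in> PiE {..<M} (\<lambda>_. S) \<Longrightarrow> 0 < (\<Prod>m<M. theta J kB T (f m) (f ((m + 1) mod M)))"
    by (intro prod_pos) (simp add: theta_pos)
qed

lemma lim_Z:
  "(\<lambda>M. ln (Z J kB T M) / real M) \<longlonglongrightarrow> ln (largest_real_root (tau J kB T))"
proof -
  have pos: "0 < tau J kB T $$ (i, j)" if "i < 4" "j < 4" for i j
  proof -
    have "0 < rowf J kB T ([1, 2, 4, 6] ! i) j"
      unfolding rowf_def using GG_props[OF that(2)] by (intro sum_pos) (auto simp: theta_pos)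
    then show ?thesis using tau_entry[OF that] by simp
  qed
  obtain c w where cw: "c > 0" "\<forall>i<4. w i > 0" "\<forall>i<4. (\<Sum>j<4. tau J kB T $$ (i, j) * w j) = c * w i"
    using perron_type[where 'n = 4 and n = 4 and Mx = "\<lambda>i j. tau J kB T $$ (i, j)"] pos by auto
  have lr: "largest_real_root (tau J kB T) = c"
    by (rule lrr[OF tau_carrier _ cw(1) cw(2) cw(3)]) (use pos in \<open>auto intro: less_imp_le\<close>)
  have eig: "\<forall>k\<in>{1..16}. (\<Sum>l\<in>{1..16}. theta J kB T k l * w (cls l)) = c * w (cls k)"
    by (rule lift16[OF cw(3)])
  have vpos: "\<forall>x\<in>{1..16::nat}. w (cls x) > 0" using cw(2) by (simp add: cls_def)
  have "(\<lambda>M. ln (\<Sum>f\<in>PiE {..<M} (\<lambda>_. {1..16::nat}). \<Prod>m<M. theta J kB T (f m) (f ((m+1) mod M))) / real M)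
           \<longlonglongrightarrow> ln c"
    by (rule growth[where v = "\<lambda>l. w (cls l)"]) (use eig vpos cw(1) theta_pos in auto)
  then show ?thesis unfolding lr Z_repr by simp
qed

lemma lim_Z':
  "(\<lambda>M. ln (Z' J kB T M) / real M) \<longlonglongrightarrow> ln (largest_real_root (tau' J kB T))"
proof -
  have pos: "0 < tau' J kB T $$ (i, j)" if "i < 3" "j < 3" for i j
  proof -
    have "0 < rowf' J kB T ([1, 2, 6] ! i) j"
      unfolding rowf'_def using GG'_props[OF that(2)] by (intro sum_pos) (auto simp: theta_pos)
    then show ?thesis using tau'_entry[OF that] by simp
  qed
  obtain c w where cw: "c > 0" "\<forall>i<3. w i > 0" "\<forall>i<3. (\<Sum>j<3. tau' J kB T $$ (i, j) * w j) = c * w i"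
    using perron_type[where 'n = 3 and n = 3 and Mx = "\<lambda>i j. tau' J kB T $$ (i, j)"] pos by auto
  have lr: "largest_real_root (tau' J kB T) = c"
    by (rule lrr[OF tau'_carrier _ cw(1) cw(2) cw(3)]) (use pos in \<open>auto intro: less_imp_le\<close>)
  have eig: "\<forall>k\<in>{1, 2, 3, 5, 6, 9, 11}. (\<Sum>l\<in>{1, 2, 3, 5, 6, 9, 11}. theta J kB T k l * w (cls' l)) = c * w (cls' k)"
    by (rule lift7[OF cw(3)])
  have vpos: "\<forall>x\<in>{1, 2, 3, 5, 6, 9, 11::nat}. w (cls' x) > 0" using cw(2) by (simp add: cls'_def)
  have "(\<lambda>M. ln (\<Sum>f\<in>PiE {..<M} (\<lambda>_. {1, 2, 3, 5, 6, 9, 11::nat}). \<Prod>m<M. theta J kB T (f m) (f ((m+1) mod M))) / real M)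
           \<longlonglongrightarrow> ln c"
    by (rule growth[where v = "\<lambda>l. w (cls' l)"]) (use eig vpos cw(1) theta_pos in auto)
  then show ?thesis unfolding lr Z'_repr by simp
qed

lemma lrr_pos: "largest_real_root (tau J kB T) > 0 \<and> largest_real_root (tau' J kB T) > 0"
proof -
  have pos: "0 < tau J kB T $$ (i, j)" if "i < 4" "j < 4" for i j
  proof -
    have "0 < rowf J kB T ([1, 2, 4, 6] ! i) j"
      unfolding rowf_def using GG_props[OF that(2)] by (intro sum_pos) (auto simp: theta_pos)
    then show ?thesis using tau_entry[OF that] by simp
  qed
  obtain c w where cw: "c > 0" "\<forall>i<4. w i > 0" "\<forall>i<4. (\<Sum>j<4. tau J kB T $$ (i, j) * w j) = c * w i"
    using perron_type[where 'n = 4 and n = 4 and Mx = "\<lambda>i j. tau J kB T $$ (i, j)"] pos by auto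
  have lr: "largest_real_root (tau J kB T) = c"
    by (rule lrr[OF tau_carrier _ cw(1) cw(2) cw(3)]) (use pos in \<open>auto intro: less_imp_le\<close>)
  have pos': "0 < tau' J kB T $$ (i, j)" if "i < 3" "j < 3" for i j
  proof -
    have "0 < rowf' J kB T ([1, 2, 6] ! i) j"
      unfolding rowf'_def using GG'_props[OF that(2)] by (intro sum_pos) (auto simp: theta_pos)
    then show ?thesis using tau'_entry[OF that] by simp
  qed
  obtain c' w' where cw': "c' > 0" "\<forall>i<3. w' i > 0" "\<forall>i<3. (\<Sum>j<3. tau' J kB T $$ (i, j) * w' j) = c' * w' i"
    using perron_type[where 'n = 3 and n = 3 and Mx = "\<lambda>i j. tau' J kB T $$ (i, j)"] pos' by auto
  have lr': "largest_real_root (tau' J kB T) = c'"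
    by (rule lrr[OF tau'_carrier _ cw'(1) cw'(2) cw'(3)]) (use pos' in \<open>auto intro: less_imp_le\<close>)
  show ?thesis using lr lr' cw(1) cw'(1) by simp
qed

theorem theorem2:
  fixes J :: "site set \<Rightarrow> real" and kB T :: real
  assumes "kB > 0" and "T > 0"
  shows "(\<lambda>M. ln (Pnp J kB T M) / real M) \<longlonglongrightarrow>
           ln (largest_real_root (tau' J kB T) / largest_real_root (tau J kB T))"
proof -
  have Zp: "Z J kB T M > 0" for M unfolding Z_repr by (rule Zsum_pos) auto
  have Z'p: "Z' J kB T M > 0" for M unfolding Z'_repr by (rule Zsum_pos) auto
  have eq: "ln (Pnp J kB T M) / real M = ln (Z' J kB T M) / real M - ln (Z J kB T M) / real M" for M
    using Zp[of M] Z'p[of M] by (simp add: Pnp_def ln_div diff_divide_distrib)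
  have "(\<lambda>M. ln (Z' J kB T M) / real M - ln (Z J kB T M) / real M) \<longlonglongrightarrow>
      ln (largest_real_root (tau' J kB T)) - ln (largest_real_root (tau J kB T))"
    by (intro tendsto_diff lim_Z lim_Z')
  moreover have "ln (largest_real_root (tau' J kB T)) - ln (largest_real_root (tau J kB T))
      = ln (largest_real_root (tau' J kB T) / largest_real_root (tau J kB T))"
    using lrr_pos[of J kB T] ln_div[of "largest_real_root (tau' J kB T)" "largest_real_root (tau J kB T)"] by simp
  ultimately show ?thesis unfolding eq by simp
qed

end
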